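(* Let $n\ge2$, $A\in\mathbb{R}^{n\times n}$, $C\in\mathbb{R}^{1\times n}$ with $(C,A)$ observable, i.e. $\operatorname{rank}[C^T\ A^TC^T\ \cdots\ (A^{n-1})^TC^T]=n$. For a matrix $M\in\mathbb{R}^{r\times n}$ let $\mathrm{nul}(M)$ denote any $n\times d$ matrix whose columns span $\mathcal{N}(M)$, where $d=\dim\mathcal{N}(M)$. Define $X_0:=\mathrm{nul}(C)$ and, for $i=1,\ldots,n-2$, $X_i:=\mathrm{nul}\!\left(\begin{bmatrix} C\\ \mathrm{nul}((AX_{i-1})^T)^T\end{bmatrix}\right)$. Let $L_{\rm pre}:=AX_{n-2}$. Then $L_{\rm pre}$ is a nonzero vector in $\mathbb{R}^n$ (a single column) with $CL_{\rm pre}\neq0$, and $L:=AL_{\rm pre}/(CL_{\rm pre})\in\mathbb{R}^{n\times1}$ makes $A-LC$ nilpotent.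
   Context: $\mathcal{N}(M)$ denotes the null space of $M$. When $\mathcal{N}(M)=\{0\}$ the matrix $\mathrm{nul}(M)$ has zero columns. *)

theory Defs
  imports "Jordan_Normal_Form.DL_Rank" "Jordan_Normal_Form.Matrix_Kernel"
begin

definition is_nul :: "real mat \<Rightarrow> real mat \<Rightarrow> bool" where
  "is_nul M N \<longleftrightarrow> N \<in> carrier_mat (dim_col M) (kernel_dim M) \<and>
     LinearCombinations.module.span (class_ring :: real ring) (module_vec TYPE(real) (dim_col M)) (set (cols N)) = mat_kernel M"

definition obs_mat :: "nat \<Rightarrow> real mat \<Rightarrow> real mat \<Rightarrow> real mat" where
  "obs_mat n C A = mat_of_cols n
     (map (\<lambda>j. col (transpose_mat (A ^\<^sub>m j) * transpose_mat C) 0) [0..<n])"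

definition nilpotent_mat :: "real mat \<Rightarrow> bool" where
  "nilpotent_mat M \<longleftrightarrow> (\<exists>k. M ^\<^sub>m k = 0\<^sub>m (dim_row M) (dim_col M))"

end

theory Submission
  imports Defs
begin


abbreviation spn :: "nat \<Rightarrow> real vec set \<Rightarrow> real vec set" where
  "spn n S \<equiv> LinearCombinations.module.span (class_ring :: real ring) (module_vec TYPE(real) n) S"

lemma pow_mat_Suc_left: assumes "A \<in> carrier_mat n n"
  shows "A ^\<^sub>m Suc k = A * A ^\<^sub>m k"
proof (induct k)
  case 0 then show ?case using assms by simp
next
  case (Suc k)
  have "A ^\<^sub>m Suc (Suc k) = (A * A ^\<^sub>m k) * A" using Suc by simp
  also have "\<dots> = A * (A ^\<^sub>m k * A)" using assms by (intro assoc_mult_mat) auto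
  finally show ?case by simp
qed

lemma transpose_scalar:
  fixes M :: "real mat"
  assumes M: "M \<in> carrier_mat n k" and y: "y \<in> carrier_vec n" and z: "z \<in> carrier_vec k"
  shows "(transpose_mat M *\<^sub>v y) \<bullet> z = y \<bullet> (M *\<^sub>v z)"
proof -
  have "transpose_mat M *\<^sub>v y = vec k (\<lambda>j. y \<bullet> col M j)"
    using M y by (intro eq_vecI) (auto intro!: comm_scalar_prod[of _ n])
  moreover have "M *\<^sub>v z = vec n (\<lambda>i. row M i \<bullet> z)" using M z by (intro eq_vecI) auto
  ultimately show ?thesis using assoc_scalar_prod[OF y M z] by simp
qed

lemma self_scalar_zero:
  fixes r :: "real vec"
  assumes "r \<in> carrier_vec n" "r \<bullet> r = 0" shows "r = 0\<^sub>v n"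
proof -
  have "(\<Sum>i\<in>{0..<n}. r $ i * r $ i) = 0" using assms unfolding scalar_prod_def by simp
  then have "\<forall>i\<in>{0..<n}. r $ i * r $ i = 0"
    by (subst sum_nonneg_eq_0_iff[symmetric]) auto
  then show ?thesis using assms by (intro eq_vecI) auto
qed

lemma span_cols_range:
  fixes N :: "real mat"
  assumes N: "N \<in> carrier_mat n k"
  shows "spn n (set (cols N)) = {N *\<^sub>v z | z. z \<in> carrier_vec k}"
proof -
  interpret V: vec_space "TYPE(real)" n .
  have cs: "set (cols N) \<subseteq> carrier_vec n" using N cols_dim by blast
  have "spn n (set (cols N)) = V.span_list (cols N)" using V.span_list_as_span[OF cs] by simp
  also have "\<dots> = {N *\<^sub>v z | z. z \<in> carrier_vec k}"
  proof -
    have l: "length (cols N) = k" using N by simp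
    have dd: "\<forall>w\<in>set (cols N). dim_vec w = n" using cs by auto
    have m: "mat_of_cols n (cols N) = N" using N mat_of_cols_cols[of N] by simp
    show ?thesis
    proof (rule equalityI; rule subsetI)
      fix x assume "x \<in> V.span_list (cols N)"
      then obtain c where "x = V.lincomb_list c (cols N)" by (rule V.in_span_listE)
      then show "x \<in> {N *\<^sub>v z | z. z \<in> carrier_vec k}"
        using V.lincomb_list_as_mat_mult[OF dd, of c] m l by auto
    next
      fix x assume "x \<in> {N *\<^sub>v z | z. z \<in> carrier_vec k}"
      then obtain z where x: "x = N *\<^sub>v z" and z: "z \<in> carrier_vec k" by blast
      have "V.lincomb_list (\<lambda>i. z $ i) (cols N) = N *\<^sub>v vec k (\<lambda>i. z $ i)"
        using V.lincomb_list_as_mat_mult[OF dd] m l by simp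
      also have "vec k (\<lambda>i. z $ i) = z" using z by auto
      finally have "x = V.lincomb_list (\<lambda>i. z $ i) (cols N)" using x by simp
      then show "x \<in> V.span_list (cols N)"
        by (intro V.in_span_listI) auto
    qed
  qed
  finally show ?thesis .
qed

lemma decomp:
  fixes ws :: "real vec list"
  assumes ws: "set ws \<subseteq> carrier_vec n" and x: "x \<in> carrier_vec n"
  shows "\<exists>p r. p \<in> spn n (set ws) \<and> r \<in> carrier_vec n \<and> x = p + r \<and> (\<forall>w\<in>set ws. r \<bullet> w = 0)"
  using ws x
proof (induct ws arbitrary: x)
  case Nil
  interpret V: vec_space "TYPE(real)" n .
  show ?case
    by (rule exI[of _ "0\<^sub>v n"], rule exI[of _ x]) (use Nil V.span_empty in auto)
next
  case (Cons w ws)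
  interpret V: vec_space "TYPE(real)" n .
  have ws: "set ws \<subseteq> carrier_vec n" and w: "w \<in> carrier_vec n" using Cons(2) by auto
  have ws': "set (w # ws) \<subseteq> carrier_vec n" using Cons(2) by auto
  obtain p r where p: "p \<in> spn n (set ws)" and r: "r \<in> carrier_vec n" and xpr: "x = p + r"
    and rw: "\<forall>u\<in>set ws. r \<bullet> u = 0" using Cons(1)[OF ws Cons(3)] by blast
  obtain q s where q: "q \<in> spn n (set ws)" and s: "s \<in> carrier_vec n" and wqs: "w = q + s"
    and sw: "\<forall>u\<in>set ws. s \<bullet> u = 0" using Cons(1)[OF ws w] by blast
  have pc: "p \<in> carrier_vec n" using p ws V.span_closed by auto
  have qc: "q \<in> carrier_vec n" using q ws V.span_closed by auto
  have mono: "spn n (set ws) \<subseteq> spn n (set (w # ws))"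
    using V.span_is_monotone[of "set ws" "set (w # ws)"] by auto
  have perp: "y \<bullet> v = 0" if y: "y \<in> carrier_vec n" "\<forall>u\<in>set ws. y \<bullet> u = 0" and v: "v \<in> spn n (set ws)" for y v
  proof -
    have "y \<in> V.orthogonal_complement (set ws)" using y unfolding V.orthogonal_complement_def by auto
    then have "y \<in> V.orthogonal_complement (spn n (set ws))"
      using V.in_orthogonal_complement_span[OF ws] by simp
    then show ?thesis using v unfolding V.orthogonal_complement_def by auto
  qed
  show ?case
  proof (cases "s \<bullet> s = 0")
    case True
    then have "s = 0\<^sub>v n" using self_scalar_zero s by blast
    then have "w = q" using wqs qc by auto
    then have "r \<bullet> w = 0" using perp[OF r rw q] by simp
    then show ?thesis using p mono r xpr rw by (intro exI[of _ p] exI[of _ r]) auto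
  next
    case False
    define c where "c = (r \<bullet> s) / (s \<bullet> s)"
    define p' where "p' = p + c \<cdot>\<^sub>v s"
    define r' where "r' = r - c \<cdot>\<^sub>v s"
    have r'c: "r' \<in> carrier_vec n" unfolding r'_def using r s by auto
    have "w \<in> spn n (set (w # ws))" using V.span_mem[OF ws'] by auto
    moreover have "(-1) \<cdot>\<^sub>v q \<in> spn n (set (w # ws))" using mono q V.smult_in_span[OF ws'] qc w ws by auto
    ultimately have "w + (-1) \<cdot>\<^sub>v q \<in> spn n (set (w # ws))" using V.span_add1[OF ws'] by auto
    moreover have "w + (-1) \<cdot>\<^sub>v q = s" using wqs qc s by (intro eq_vecI) auto
    ultimately have ss: "s \<in> spn n (set (w # ws))" by simp
    have p': "p' \<in> spn n (set (w # ws))" unfolding p'_def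
      using V.span_add1[OF ws'] mono p V.smult_in_span[OF ws' ss] by auto
    have x': "x = p' + r'" unfolding p'_def r'_def xpr using pc r s by (intro eq_vecI) auto
    have r'ws: "\<forall>u\<in>set ws. r' \<bullet> u = 0"
    proof
      fix u assume u: "u \<in> set ws"
      then have uc: "u \<in> carrier_vec n" using ws by auto
      have "r' \<bullet> u = r \<bullet> u - (c \<cdot>\<^sub>v s) \<bullet> u" unfolding r'_def
        using minus_scalar_prod_distrib[of r n "c \<cdot>\<^sub>v s" u] r s uc by auto
      also have "\<dots> = 0" using rw sw u s uc by simp
      finally show "r' \<bullet> u = 0" .
    qed
    have "r' \<bullet> s = r \<bullet> s - (c \<cdot>\<^sub>v s) \<bullet> s" unfolding r'_def
      using minus_scalar_prod_distrib[of r n "c \<cdot>\<^sub>v s" s] r s by auto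
    also have "\<dots> = r \<bullet> s - c * (s \<bullet> s)" using s by simp
    also have "\<dots> = 0" unfolding c_def using False by simp
    finally have r's: "r' \<bullet> s = 0" .
    have "r' \<bullet> w = r' \<bullet> q + r' \<bullet> s" unfolding wqs
      using scalar_prod_add_distrib[of r' n q s] r'c qc s by auto
    also have "\<dots> = 0" using perp[OF r'c r'ws q] r's by simp
    finally have "r' \<bullet> w = 0" .
    then show ?thesis using p' r'c x' r'ws by (intro exI[of _ p'] exI[of _ r']) auto
  qed
qed

lemma perp_span:
  fixes S :: "real vec set"
  assumes S: "S \<subseteq> carrier_vec n" and y: "y \<in> carrier_vec n" "\<forall>u\<in>S. y \<bullet> u = 0"
    and v: "v \<in> spn n S"
  shows "y \<bullet> v = 0"
proof -
  interpret V: vec_space "TYPE(real)" n .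
  have "y \<in> V.orthogonal_complement S" using y unfolding V.orthogonal_complement_def by auto
  then have "y \<in> V.orthogonal_complement (spn n S)"
    using V.in_orthogonal_complement_span[OF S] by simp
  then show ?thesis using v unfolding V.orthogonal_complement_def by auto
qed

lemma orth_range:
  fixes M :: "real mat"
  assumes M: "M \<in> carrier_mat n k" and x: "x \<in> carrier_vec n"
    and orth: "\<forall>y\<in>carrier_vec n. transpose_mat M *\<^sub>v y = 0\<^sub>v k \<longrightarrow> x \<bullet> y = 0"
  shows "\<exists>z\<in>carrier_vec k. x = M *\<^sub>v z"
proof -
  have cs: "set (cols M) \<subseteq> carrier_vec n" using M cols_dim by blast
  obtain p r where p: "p \<in> spn n (set (cols M))" and r: "r \<in> carrier_vec n" and xpr: "x = p + r"
    and rw: "\<forall>w\<in>set (cols M). r \<bullet> w = 0" using decomp[OF cs x] by blast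
  interpret V: vec_space "TYPE(real)" n .
  have pc: "p \<in> carrier_vec n" using p cs V.span_closed by auto
  have "transpose_mat M *\<^sub>v r = 0\<^sub>v k"
  proof (rule eq_vecI)
    fix j assume "j < dim_vec (0\<^sub>v k :: real vec)"
    then have j: "j < k" by simp
    have "col M j \<in> set (cols M)" using j M by (auto simp: cols_def)
    then have "r \<bullet> col M j = 0" using rw by auto
    moreover have "col M j \<bullet> r = r \<bullet> col M j" using M r j by (intro comm_scalar_prod[of _ n]) auto
    ultimately show "(transpose_mat M *\<^sub>v r) $ j = 0\<^sub>v k $ j" using M j by simp
  qed (use M in simp)
  then have xr: "x \<bullet> r = 0" using orth r by auto
  have pr: "r \<bullet> p = 0" using perp_span[OF cs r rw p] .
  have "x \<bullet> r = p \<bullet> r + r \<bullet> r" unfolding xpr using add_scalar_prod_distrib[OF pc r r] .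
  moreover have "p \<bullet> r = r \<bullet> p" using comm_scalar_prod[OF pc r] .
  ultimately have "r \<bullet> r = 0" using xr pr by simp
  then have "r = 0\<^sub>v n" using self_scalar_zero r by blast
  then have "x = p" using xpr pc by simp
  then show ?thesis using p span_cols_range[OF M] by auto
qed

lemma zero_append: "0\<^sub>v (a + b) = (0\<^sub>v a :: 'a :: zero vec) @\<^sub>v 0\<^sub>v b"
  by (intro eq_vecI) (auto simp: append_vec_def)

lemma nul_step:
  fixes A C Xp Y Xi :: "real mat"
  assumes A: "A \<in> carrier_mat n n" and C: "C \<in> carrier_mat 1 n" and Xp: "Xp \<in> carrier_mat n kp"
    and nY: "is_nul (transpose_mat (A * Xp)) Y"
    and nX: "is_nul (C @\<^sub>r transpose_mat Y) Xi"
  shows "Xi \<in> carrier_mat n (dim_col Xi)"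
    "spn n (set (cols Xi)) = {x \<in> carrier_vec n. C *\<^sub>v x = 0\<^sub>v 1 \<and> x \<in> (\<lambda>v. A *\<^sub>v v) ` spn n (set (cols Xp))}"
proof -
  interpret V: vec_space "TYPE(real)" n .
  define B where "B = A * Xp"
  have B: "B \<in> carrier_mat n kp" unfolding B_def using A Xp by auto
  have BT: "transpose_mat B \<in> carrier_mat kp n" using B by auto
  define ky where "ky = kernel_dim (transpose_mat B)"
  have Y: "Y \<in> carrier_mat n ky" and spY: "spn n (set (cols Y)) = mat_kernel (transpose_mat B)"
    using nY B unfolding is_nul_def B_def[symmetric] ky_def by auto
  have YT: "transpose_mat Y \<in> carrier_mat ky n" using Y by auto
  define M where "M = C @\<^sub>r transpose_mat Y"
  have Mc: "M \<in> carrier_mat (1 + ky) n" unfolding M_def by (rule carrier_append_rows[OF C YT])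
  have Xi: "Xi \<in> carrier_mat n (kernel_dim M)" and spX: "spn n (set (cols Xi)) = mat_kernel M"
    using nX Mc unfolding is_nul_def M_def[symmetric] by auto
  show "Xi \<in> carrier_mat n (dim_col Xi)" using Xi by auto
  have cY: "set (cols Y) \<subseteq> carrier_vec n" using Y cols_dim by blast
  have key: "transpose_mat Y *\<^sub>v x = 0\<^sub>v ky \<longleftrightarrow> (\<exists>z\<in>carrier_vec kp. x = B *\<^sub>v z)"
    if x: "x \<in> carrier_vec n" for x
  proof
    assume h: "transpose_mat Y *\<^sub>v x = 0\<^sub>v ky"
    have "\<forall>w\<in>set (cols Y). x \<bullet> w = 0"
    proof
      fix w assume "w \<in> set (cols Y)"
      then obtain j where j: "j < ky" and wj: "w = col Y j" using Y by (auto simp: cols_def)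
      have "(transpose_mat Y *\<^sub>v x) $ j = col Y j \<bullet> x" using Y j by simp
      then have "col Y j \<bullet> x = 0" using h j by simp
      then show "x \<bullet> w = 0" using wj comm_scalar_prod[of x n "col Y j"] x Y j by auto
    qed
    then have "\<forall>y\<in>carrier_vec n. transpose_mat B *\<^sub>v y = 0\<^sub>v kp \<longrightarrow> x \<bullet> y = 0"
      using perp_span[OF cY x] spY BT unfolding mat_kernel_def by auto
    then show "\<exists>z\<in>carrier_vec kp. x = B *\<^sub>v z" using orth_range[OF B x] by blast
  next
    assume "\<exists>z\<in>carrier_vec kp. x = B *\<^sub>v z"
    then obtain z where z: "z \<in> carrier_vec kp" and xz: "x = B *\<^sub>v z" by blast
    show "transpose_mat Y *\<^sub>v x = 0\<^sub>v ky"
    proof (rule eq_vecI)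
      fix j assume "j < dim_vec (0\<^sub>v ky :: real vec)"
      then have j: "j < ky" by simp
      have "col Y j \<in> spn n (set (cols Y))"
        using j Y V.span_mem[OF cY, of "col Y j"] by (auto simp: cols_def)
      then have y: "col Y j \<in> carrier_vec n" "transpose_mat B *\<^sub>v col Y j = 0\<^sub>v kp"
        using spY BT unfolding mat_kernel_def by auto
      have "col Y j \<bullet> x = (transpose_mat B *\<^sub>v col Y j) \<bullet> z"
        unfolding xz using transpose_scalar[OF B y(1) z] by simp
      also have "\<dots> = 0" using y z by simp
      finally show "(transpose_mat Y *\<^sub>v x) $ j = 0\<^sub>v ky $ j" using Y j by simp
    qed (use Y in simp)
  qed
  have rng: "{B *\<^sub>v z | z. z \<in> carrier_vec kp} = (\<lambda>v. A *\<^sub>v v) ` spn n (set (cols Xp))"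
    unfolding span_cols_range[OF Xp] B_def using A Xp
    by (auto simp: assoc_mult_mat_vec) (metis assoc_mult_mat_vec)
  show "spn n (set (cols Xi)) = {x \<in> carrier_vec n. C *\<^sub>v x = 0\<^sub>v 1 \<and> x \<in> (\<lambda>v. A *\<^sub>v v) ` spn n (set (cols Xp))}"
  proof -
    have "mat_kernel M = {x \<in> carrier_vec n. C *\<^sub>v x = 0\<^sub>v 1 \<and> transpose_mat Y *\<^sub>v x = 0\<^sub>v ky}"
    proof -
      have "M *\<^sub>v x = 0\<^sub>v (1 + ky) \<longleftrightarrow> C *\<^sub>v x = 0\<^sub>v 1 \<and> transpose_mat Y *\<^sub>v x = 0\<^sub>v ky"
        if x: "x \<in> carrier_vec n" for x
        unfolding M_def mat_mult_append[OF C YT x] zero_append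
        by (rule append_vec_eq[of _ 1]) (use C x in auto)
      then show ?thesis unfolding mat_kernel[OF Mc] by auto
    qed
    moreover have "(\<exists>z\<in>carrier_vec kp. x = B *\<^sub>v z) \<longleftrightarrow> x \<in> (\<lambda>v. A *\<^sub>v v) ` spn n (set (cols Xp))" for x
      unfolding rng[symmetric] by blast
    ultimately show ?thesis unfolding spX using key by auto
  qed
qed

lemma nul_base:
  fixes C X0 :: "real mat"
  assumes C: "C \<in> carrier_mat 1 n" and nX: "is_nul C X0"
  shows "X0 \<in> carrier_mat n (dim_col X0)" "spn n (set (cols X0)) = {x \<in> carrier_vec n. C *\<^sub>v x = 0\<^sub>v 1}"
  using nX C unfolding is_nul_def mat_kernel_def by auto

lemma C_zero_iff:
  fixes C :: "real mat"
  assumes C: "C \<in> carrier_mat 1 n" and u: "u \<in> carrier_vec n"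
  shows "C *\<^sub>v u = 0\<^sub>v 1 \<longleftrightarrow> row C 0 \<bullet> u = 0"
proof
  assume "C *\<^sub>v u = 0\<^sub>v 1"
  then have "(C *\<^sub>v u) $ 0 = 0" by simp
  then show "row C 0 \<bullet> u = 0" using C by simp
next
  assume "row C 0 \<bullet> u = 0"
  then show "C *\<^sub>v u = 0\<^sub>v 1" using C by (intro eq_vecI) auto
qed

lemma powv_Suc:
  fixes A :: "real mat"
  assumes A: "A \<in> carrier_mat n n" and u: "u \<in> carrier_vec n"
  shows "(A ^\<^sub>m Suc k) *\<^sub>v u = A *\<^sub>v ((A ^\<^sub>m k) *\<^sub>v u)"
  unfolding pow_mat_Suc_left[OF A] using A u by (intro assoc_mult_mat_vec) auto

lemma powv_carrier[simp]:
  "A \<in> carrier_mat n n \<Longrightarrow> (A ^\<^sub>m k) *\<^sub>v u \<in> carrier_vec n"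
  by (metis carrier_vec_dim_vec dim_mult_mat_vec pow_mat_dim_square(1))

lemma powv_add:
  fixes A :: "real mat"
  assumes A: "A \<in> carrier_mat n n" and u: "u \<in> carrier_vec n"
  shows "(A ^\<^sub>m (p + q)) *\<^sub>v u = (A ^\<^sub>m p) *\<^sub>v ((A ^\<^sub>m q) *\<^sub>v u)"
proof (induct p)
  case 0 then show ?case using A u one_mult_mat_vec[OF powv_carrier[OF A, of q u]] by simp
next
  case (Suc p)
  have "(A ^\<^sub>m (Suc p + q)) *\<^sub>v u = A *\<^sub>v ((A ^\<^sub>m (p + q)) *\<^sub>v u)" using powv_Suc[OF A u] by simp
  also have "\<dots> = A *\<^sub>v ((A ^\<^sub>m p) *\<^sub>v ((A ^\<^sub>m q) *\<^sub>v u))" using Suc by simp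
  also have "\<dots> = (A ^\<^sub>m Suc p) *\<^sub>v ((A ^\<^sub>m q) *\<^sub>v u)" using powv_Suc[OF A, of "(A ^\<^sub>m q) *\<^sub>v u"] A u by simp
  finally show ?case .
qed

lemma obs_inj:
  fixes A C :: "real mat"
  assumes A: "A \<in> carrier_mat n n" and C: "C \<in> carrier_mat 1 n"
    and rk: "vec_space.rank n (obs_mat n C A) = n"
    and u: "u \<in> carrier_vec n" and h: "\<forall>j<n. row C 0 \<bullet> ((A ^\<^sub>m j) *\<^sub>v u) = 0"
  shows "u = 0\<^sub>v n"
proof (rule ccontr)
  assume nz: "u \<noteq> 0\<^sub>v n"
  define Ob where "Ob = obs_mat n C A"
  define vs where "vs = map (\<lambda>j. col (transpose_mat (A ^\<^sub>m j) * transpose_mat C) 0) [0..<n]"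
  have vsj: "vs ! j = transpose_mat (A ^\<^sub>m j) *\<^sub>v row C 0" if j: "j < n" for j
  proof -
    have "vs ! j = col (transpose_mat (A ^\<^sub>m j) * transpose_mat C) 0" unfolding vs_def using j by simp
    also have "\<dots> = transpose_mat (A ^\<^sub>m j) *\<^sub>v col (transpose_mat C) 0"
      using A C by (intro col_mult2[of _ n n _ 1]) auto
    also have "col (transpose_mat C) 0 = row C 0" using C by simp
    finally show ?thesis .
  qed
  have Oc: "Ob \<in> carrier_mat n n" unfolding Ob_def obs_mat_def using mat_of_cols_carrier(1)[of n "map (\<lambda>j. col (transpose_mat (A ^\<^sub>m j) * transpose_mat C) 0) [0..<n]"] by simp
  have colO: "col Ob j = transpose_mat (A ^\<^sub>m j) *\<^sub>v row C 0" if j: "j < n" for j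
  proof -
    have tc: "transpose_mat (A ^\<^sub>m j) \<in> carrier_mat n n" using A by simp
    have rc: "row C 0 \<in> carrier_vec n" using row_carrier_vec[OF _ C, of 0] by simp
    have "j < length vs" using j unfolding vs_def by simp
    moreover have "vs ! j \<in> carrier_vec n" unfolding vsj[OF j] using mult_mat_vec_carrier[OF tc rc] .
    ultimately have "col (mat_of_cols n vs) j = vs ! j" by (rule col_mat_of_cols)
    then have "col Ob j = vs ! j" unfolding Ob_def obs_mat_def vs_def .
    then show ?thesis using vsj[OF j] by simp
  qed
  have "det Ob \<noteq> 0" using vec_space.det_rank_iff[OF Oc] rk unfolding Ob_def by simp
  then have dT: "det (transpose_mat Ob) \<noteq> 0" using det_transpose[OF Oc] by simp
  have OT: "transpose_mat Ob \<in> carrier_mat n n" using Oc by simp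
  have "transpose_mat Ob *\<^sub>v u = 0\<^sub>v n"
  proof (rule eq_vecI)
    fix j assume "j < dim_vec (0\<^sub>v n :: real vec)"
    then have j: "j < n" by simp
    have "(transpose_mat Ob *\<^sub>v u) $ j = col Ob j \<bullet> u" using Oc j by simp
    also have "\<dots> = row C 0 \<bullet> ((A ^\<^sub>m j) *\<^sub>v u)" unfolding colO[OF j]
      using transpose_scalar[of "A ^\<^sub>m j" n n "row C 0" u] A u row_carrier[of C 0] C by simp
    also have "\<dots> = 0" using h j by simp
    finally show "(transpose_mat Ob *\<^sub>v u) $ j = 0\<^sub>v n $ j" using j by simp
  qed (use Oc in simp)
  then show False using det_0_iff_vec_prod_zero_field[OF OT] dT u nz by blast
qed

lemma exists_x0:
  fixes A C :: "real mat"
  assumes A: "A \<in> carrier_mat n n" and C: "C \<in> carrier_mat 1 n" and n: "n \<ge> 1"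
  shows "\<exists>x0\<in>carrier_vec n. x0 \<noteq> 0\<^sub>v n \<and> (\<forall>j<n-1. row C 0 \<bullet> ((A ^\<^sub>m j) *\<^sub>v x0) = 0)"
proof -
  have rc: "row C 0 \<in> carrier_vec n" using row_carrier_vec[OF _ C, of 0] by simp
  define f where "f i = transpose_mat (A ^\<^sub>m i) *\<^sub>v row C 0" for i
  have fc: "f i \<in> carrier_vec n" for i
  proof -
    have tc: "transpose_mat (A ^\<^sub>m i) \<in> carrier_mat n n" using A by simp
    show ?thesis unfolding f_def using mult_mat_vec_carrier[OF tc rc] .
  qed
  define R where "R = mat\<^sub>r n n (\<lambda>i. if i = n - 1 then 0\<^sub>v n else f i)"
  have Rc: "R \<in> carrier_mat n n" unfolding R_def by simp
  have "det R = 0" unfolding R_def by (rule det_row_0) (use n fc in auto)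
  then obtain v where v: "v \<in> carrier_vec n" "v \<noteq> 0\<^sub>v n" "R *\<^sub>v v = 0\<^sub>v n"
    using det_0_iff_vec_prod_zero_field[OF Rc] by blast
  have "row C 0 \<bullet> ((A ^\<^sub>m j) *\<^sub>v v) = 0" if j: "j < n - 1" for j
  proof -
    have jn: "j < n" using j by simp
    have "row R j = f j" unfolding R_def using j fc[of j] by (subst row_mat_of_row_fun) auto
    then have "(R *\<^sub>v v) $ j = f j \<bullet> v" using Rc jn by simp
    also have "\<dots> = row C 0 \<bullet> ((A ^\<^sub>m j) *\<^sub>v v)" unfolding f_def
      using transpose_scalar[of "A ^\<^sub>m j" n n "row C 0" v] A v rc by simp
    finally show ?thesis using v(3) jn by simp
  qed
  then show ?thesis using v by blast
qed

lemma mult_mat_vec_zero: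
  fixes M :: "'a :: comm_ring_1 mat"
  assumes "M \<in> carrier_mat nr nc" shows "M *\<^sub>v 0\<^sub>v nc = 0\<^sub>v nr"
  using assms by (intro eq_vecI) (auto simp: scalar_prod_def)

lemma scalar_mult_cols:
  fixes M :: "real mat"
  assumes M: "M \<in> carrier_mat n k" and c: "c \<in> carrier_vec n" and a: "a \<in> carrier_vec k"
  shows "c \<bullet> (M *\<^sub>v a) = (\<Sum>j<k. a $ j * (c \<bullet> col M j))"
proof -
  have "c \<bullet> (M *\<^sub>v a) = (transpose_mat M *\<^sub>v c) \<bullet> a" using transpose_scalar[OF M c a] by simp
  also have "\<dots> = (\<Sum>j\<in>{0..<k}. (transpose_mat M *\<^sub>v c) $ j * a $ j)" using M a unfolding scalar_prod_def by simp
  also have "\<dots> = (\<Sum>j<k. a $ j * (c \<bullet> col M j))"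
    using M c by (intro sum.cong) (auto simp: comm_scalar_prod[of _ n] lessThan_atLeast0)
  finally show ?thesis .
qed

lemma nilpotent_krylov:
  fixes A F :: "real mat" and c x0 :: "real vec"
  assumes A: "A \<in> carrier_mat n n" and c: "c \<in> carrier_vec n" and x0: "x0 \<in> carrier_vec n"
    and n: "n \<ge> 1"
    and hz: "\<forall>j<n-1. c \<bullet> ((A ^\<^sub>m j) *\<^sub>v x0) = 0"
    and g: "c \<bullet> ((A ^\<^sub>m (n-1)) *\<^sub>v x0) \<noteq> 0"
    and F: "F \<in> carrier_mat n n"
    and hF: "\<forall>u\<in>carrier_vec n. F *\<^sub>v u = A *\<^sub>v u - ((c \<bullet> u) / (c \<bullet> ((A ^\<^sub>m (n-1)) *\<^sub>v x0))) \<cdot>\<^sub>v (A *\<^sub>v ((A ^\<^sub>m (n-1)) *\<^sub>v x0))"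
  shows "F ^\<^sub>m n = 0\<^sub>m n n"
proof -
  define e where "e j = (A ^\<^sub>m j) *\<^sub>v x0" for j
  define \<gamma> where "\<gamma> = c \<bullet> e (n-1)"
  have ec: "e j \<in> carrier_vec n" for j unfolding e_def using A by simp
  have gz: "\<gamma> \<noteq> 0" using g unfolding \<gamma>_def e_def .
  have eS: "A *\<^sub>v e j = e (Suc j)" for j unfolding e_def using powv_Suc[OF A x0] by simp
  have Fe1: "F *\<^sub>v e j = e (Suc j)" if j: "j < n - 1" for j
  proof -
    have "c \<bullet> e j = 0" using hz j unfolding e_def by simp
    then have "F *\<^sub>v e j = e (Suc j) - 0 \<cdot>\<^sub>v (A *\<^sub>v e (n - 1))"
      using hF ec[of j] eS[of j] A by (simp add: e_def[symmetric])
    also have "\<dots> = e (Suc j)" using ec[of "Suc j"] ec[of "n-1"] A by (intro eq_vecI) auto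
    finally show ?thesis .
  qed
  have Fe2: "F *\<^sub>v e (n - 1) = 0\<^sub>v n"
  proof -
    have "F *\<^sub>v e (n-1) = A *\<^sub>v e (n-1) - (\<gamma> / \<gamma>) \<cdot>\<^sub>v (A *\<^sub>v e (n-1))"
      using hF ec[of "n-1"] unfolding e_def \<gamma>_def by simp
    also have "\<dots> = 0\<^sub>v n" using gz A ec[of "n-1"] by (intro eq_vecI) auto
    finally show ?thesis .
  qed
  have Fpow: "(F ^\<^sub>m m) *\<^sub>v e j = (if j + m \<le> n - 1 then e (j + m) else 0\<^sub>v n)" if j: "j < n" for j m
  proof (induct m)
    case 0
    have "j \<le> n - 1" using j by simp
    then show ?case using j ec[of j] F by simp
  next
    case (Suc m)
    have "(F ^\<^sub>m Suc m) *\<^sub>v e j = F *\<^sub>v ((F ^\<^sub>m m) *\<^sub>v e j)" using powv_Suc[OF F ec] by simp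
    also have "\<dots> = (if j + Suc m \<le> n - 1 then e (j + Suc m) else 0\<^sub>v n)"
    proof (cases "j + m < n - 1")
      case True then show ?thesis using Suc Fe1[of "j+m"] by simp
    next
      case False
      show ?thesis
      proof (cases "j + m = n - 1")
        case True then show ?thesis using Suc Fe2 by simp
      next
        case False2: False
        then show ?thesis using Suc False F by (simp add: mult_mat_vec_zero)
      qed
    qed
    finally show ?case .
  qed
  define K where "K = mat_of_cols n (map e [0..<n])"
  have Kc: "K \<in> carrier_mat n n" unfolding K_def using mat_of_cols_carrier(1)[of n "map e [0..<n]"] by simp
  have colK: "col K j = e j" if j: "j < n" for j
  proof -
    have "j < length (map e [0..<n])" using j by simp
    moreover have "map e [0..<n] ! j \<in> carrier_vec n" using j ec by simp
    ultimately have "col (mat_of_cols n (map e [0..<n])) j = map e [0..<n] ! j" by (rule col_mat_of_cols)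
    then show ?thesis unfolding K_def using j by simp
  qed
  have FK: "F ^\<^sub>m n * K = 0\<^sub>m n n"
  proof (rule eq_matI)
    fix i j assume "i < dim_row (0\<^sub>m n n :: real mat)" "j < dim_col (0\<^sub>m n n :: real mat)"
    then have i: "i < n" and j: "j < n" by auto
    have "(F ^\<^sub>m n * K) $$ (i, j) = row (F ^\<^sub>m n) i \<bullet> col K j" using F Kc i j by simp
    also have "\<dots> = ((F ^\<^sub>m n) *\<^sub>v e j) $ i" using colK[OF j] F i by simp
    also have "\<dots> = 0" using Fpow[OF j, of n] j i by simp
    finally show "(F ^\<^sub>m n * K) $$ (i, j) = 0\<^sub>m n n $$ (i, j)" using i j by simp
  qed (use F Kc in auto)
  have Kinj: "a = 0\<^sub>v n" if a: "a \<in> carrier_vec n" and Ka: "K *\<^sub>v a = 0\<^sub>v n" for a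
  proof (rule ccontr)
    assume anz: "a \<noteq> 0\<^sub>v n"
    then obtain j0 where j0: "j0 < n" "a $ j0 \<noteq> 0" using a by (metis carrier_vecD eq_vecI index_zero_vec(1,2))
    define m where "m = (GREATEST j. j < n \<and> a $ j \<noteq> 0)"
    have bnd: "\<forall>y. y < n \<and> a $ y \<noteq> 0 \<longrightarrow> y \<le> n" by auto
    have mP: "m < n \<and> a $ m \<noteq> 0" unfolding m_def
      by (rule GreatestI_nat[of _ j0 n]) (use j0 in auto)
    have mG: "j \<le> m" if "j < n" "a $ j \<noteq> 0" for j unfolding m_def
      by (rule Greatest_le_nat[of _ j n]) (use that in auto)
    define p where "p = n - 1 - m"
    define P where "P = A ^\<^sub>m p * K"
    have Pc: "P \<in> carrier_mat n n" unfolding P_def using mult_carrier_mat[OF pow_carrier_mat[OF A] Kc] .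
    have colP: "col P j = e (p + j)" if j: "j < n" for j
    proof -
      have "col P j = A ^\<^sub>m p *\<^sub>v col K j" unfolding P_def using A Kc j by (intro col_mult2) auto
      also have "\<dots> = e (p + j)" unfolding colK[OF j] e_def using powv_add[OF A x0] by simp
      finally show ?thesis .
    qed
    have "c \<bullet> (P *\<^sub>v a) = (\<Sum>j<n. a $ j * (c \<bullet> col P j))" by (rule scalar_mult_cols[OF Pc c a])
    also have "\<dots> = (\<Sum>j<n. if j = m then a $ m * \<gamma> else 0)"
    proof (rule sum.cong[OF refl])
      fix j assume "j \<in> {..<n}"
      then have j: "j < n" by simp
      show "a $ j * (c \<bullet> col P j) = (if j = m then a $ m * \<gamma> else 0)"
      proof (cases "j = m")
        case True then show ?thesis unfolding colP[OF j] \<gamma>_def p_def using mP by simp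
      next
        case False
        show ?thesis
        proof (cases "j < m")
          case True
          then have "p + j < n - 1" unfolding p_def using mP by linarith
          then have "c \<bullet> e (p + j) = 0" using hz unfolding e_def by simp
          then show ?thesis using False colP[OF j] by simp
        next
          case False2: False
          then have "a $ j = 0" using mG[OF j] False by force
          then show ?thesis using False by simp
        qed
      qed
    qed
    also have "\<dots> = a $ m * \<gamma>" using mP by simp
    finally have eq1: "c \<bullet> (P *\<^sub>v a) = a $ m * \<gamma>" .
    have "P *\<^sub>v a = A ^\<^sub>m p *\<^sub>v (K *\<^sub>v a)" unfolding P_def using A Kc a by (intro assoc_mult_mat_vec) auto
    also have "\<dots> = 0\<^sub>v n" unfolding Ka using mult_mat_vec_zero[OF pow_carrier_mat[OF A]] by simp
    finally have "c \<bullet> (P *\<^sub>v a) = 0" using c by simp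
    then show False using eq1 mP gz by simp
  qed
  have "det K \<noteq> 0" using det_0_iff_vec_prod_zero_field[OF Kc] Kinj by blast
  from det_non_zero_imp_unit[OF Kc this, unfolded Units_def, of "()"]
  obtain Ki where Ki: "Ki \<in> carrier_mat n n" and KKi: "K * Ki = 1\<^sub>m n"
    by (auto simp: ring_mat_def)
  have "F ^\<^sub>m n = F ^\<^sub>m n * (K * Ki)" unfolding KKi using F by simp
  also have "\<dots> = (F ^\<^sub>m n * K) * Ki" using assoc_mult_mat[OF pow_carrier_mat[OF F] Kc Ki] by simp
  also have "\<dots> = 0\<^sub>m n n" unfolding FK using Ki by simp
  finally show ?thesis .
qed

lemma single_mul:
  fixes v z :: "real vec"
  assumes v: "v \<in> carrier_vec n" and z: "z \<in> carrier_vec 1"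
  shows "mat_of_cols n [v] *\<^sub>v z = (z $ 0) \<cdot>\<^sub>v v"
proof (rule eq_vecI)
  fix i assume "i < dim_vec ((z $ 0) \<cdot>\<^sub>v v)"
  then have i: "i < n" using v by simp
  have "(mat_of_cols n [v] *\<^sub>v z) $ i = row (mat_of_cols n [v]) i \<bullet> z" using i by simp
  also have "\<dots> = v $ i * z $ 0" using i z unfolding scalar_prod_def by (simp add: mat_of_cols_def row_def)
  finally show "(mat_of_cols n [v] *\<^sub>v z) $ i = ((z $ 0) \<cdot>\<^sub>v v) $ i" using i v by simp
qed (use v in simp)

lemma span_single:
  fixes v :: "real vec"
  assumes v: "v \<in> carrier_vec n"
  shows "spn n {v} = {a \<cdot>\<^sub>v v | a. True}"
proof -
  have M: "mat_of_cols n [v] \<in> carrier_mat n 1" using mat_of_cols_carrier(1)[of n "[v]"] by simp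
  have cs: "set (cols (mat_of_cols n [v])) = {v}" using v by simp
  have "spn n {v} = {mat_of_cols n [v] *\<^sub>v z | z. z \<in> carrier_vec 1}"
    using span_cols_range[OF M] cs by simp
  also have "\<dots> = {a \<cdot>\<^sub>v v | a. True}"
  proof (rule equalityI; rule subsetI)
    fix x assume "x \<in> {mat_of_cols n [v] *\<^sub>v z | z. z \<in> carrier_vec 1}"
    then obtain z where "x = mat_of_cols n [v] *\<^sub>v z" "z \<in> carrier_vec 1" by blast
    then show "x \<in> {a \<cdot>\<^sub>v v | a. True}" using single_mul[OF v] by auto
  next
    fix x assume "x \<in> {a \<cdot>\<^sub>v v | a. True}"
    then obtain a where x: "x = a \<cdot>\<^sub>v v" by blast
    have "mat_of_cols n [v] *\<^sub>v vec 1 (\<lambda>_. a) = x" using single_mul[OF v, of "vec 1 (\<lambda>_. a)"] x by simp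
    then show "x \<in> {mat_of_cols n [v] *\<^sub>v z | z. z \<in> carrier_vec 1}"
      by (intro CollectI exI[of _ "vec 1 (\<lambda>_. a)"]) auto
  qed
  finally show ?thesis .
qed

lemma kdim_one:
  fixes M :: "real mat" and v :: "real vec"
  assumes M: "M \<in> carrier_mat nr n" and v: "v \<in> carrier_vec n" "v \<noteq> 0\<^sub>v n"
    and ker: "mat_kernel M = spn n {v}"
  shows "kernel_dim M = 1"
proof -
  interpret K: kernel nr n M by (unfold_locales) (rule M)
  have vk: "{v} \<subseteq> mat_kernel M" using ker K.NC.span_mem[of "{v}" v] v by auto
  have "K.NC.lin_indpt {v}"
  proof
    assume "K.NC.lin_dep {v}"
    moreover have "distinct (cols (mat_of_cols n [v]))" using v by simp
    moreover have "set (cols (mat_of_cols n [v])) = {v}" using v by simp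
    ultimately obtain z where z: "z \<in> carrier_vec 1" "z \<noteq> 0\<^sub>v 1" "mat_of_cols n [v] *\<^sub>v z = 0\<^sub>v n"
      using K.NC.lin_depE[of "mat_of_cols n [v]" 1] mat_of_cols_carrier(1)[of n "[v]"] by auto
    then have "(z $ 0) \<cdot>\<^sub>v v = 0\<^sub>v n" using single_mul[OF v(1) z(1)] by simp
    moreover have "z $ 0 \<noteq> 0" using z(1,2) by (metis carrier_vecD eq_vecI index_zero_vec(1,2) less_one)
    ultimately have "v = 0\<^sub>v n"
    proof -
      assume h: "(z $ 0) \<cdot>\<^sub>v v = 0\<^sub>v n" and t: "z $ 0 \<noteq> 0"
      show "v = 0\<^sub>v n"
      proof (rule eq_vecI)
        fix i assume "i < dim_vec (0\<^sub>v n :: real vec)"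
        then have i: "i < n" by simp
        have "((z $ 0) \<cdot>\<^sub>v v) $ i = 0" using h i by simp
        then have "z $ 0 * v $ i = 0" using i v(1) by simp
        then show "v $ i = 0\<^sub>v n $ i" using t i by simp
      qed (use v(1) in simp)
    qed
    then show False using v(2) by simp
  qed
  then have li: "K.Ker.lin_indpt {v}" using K.lindep_same[OF vk] by simp
  have gs: "K.Ker.gen_set {v}" using K.span_same[OF vk] ker by simp
  have "K.basis {v}" unfolding K.Ker.basis_def using li gs vk by simp
  then have "K.dim = 1" using K.Ker.dim_basis[of "{v}"] by simp
  then show ?thesis by simp
qed

lemma lin_ex:
  fixes A :: "real mat"
  assumes A: "A \<in> carrier_mat n n" and c: "c \<in> carrier_vec n" and u: "u \<in> carrier_vec n" and x: "x \<in> carrier_vec n"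
  shows "c \<bullet> ((A ^\<^sub>m j) *\<^sub>v (u - t \<cdot>\<^sub>v x)) = c \<bullet> ((A ^\<^sub>m j) *\<^sub>v u) - t * (c \<bullet> ((A ^\<^sub>m j) *\<^sub>v x))"
proof -
  have P: "A ^\<^sub>m j \<in> carrier_mat n n" using A by simp
  have "(A ^\<^sub>m j) *\<^sub>v (u - t \<cdot>\<^sub>v x) = (A ^\<^sub>m j) *\<^sub>v u - t \<cdot>\<^sub>v ((A ^\<^sub>m j) *\<^sub>v x)"
    using mult_minus_distrib_mat_vec[OF P u, of "t \<cdot>\<^sub>v x"] mult_mat_vec[OF P x] x by simp
  then show ?thesis using scalar_prod_minus_distrib[OF c, of "(A ^\<^sub>m j) *\<^sub>v u" "t \<cdot>\<^sub>v ((A ^\<^sub>m j) *\<^sub>v x)"]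
      c A by simp
qed

lemma mat_vec_col1:
  fixes L :: "real mat"
  assumes L: "L \<in> carrier_mat n 1" and z: "z \<in> carrier_vec 1"
  shows "L *\<^sub>v z = (z $ 0) \<cdot>\<^sub>v col L 0"
proof -
  have "mat_of_cols n [col L 0] = L" using L by (intro eq_matI) (auto simp: mat_of_cols_def)
  moreover have "col L 0 \<in> carrier_vec n" using L by (simp add: carrier_vecI)
  ultimately show ?thesis using single_mul[of "col L 0" n z] z by simp
qed



declare pow_mat.simps(2)[simp del]

theorem mainTheorem10:
  fixes n :: nat and A C :: "real mat" and X Y :: "nat \<Rightarrow> real mat"
  assumes "n \<ge> 2"
    and "A \<in> carrier_mat n n" and "C \<in> carrier_mat 1 n"
    and "vec_space.rank n (obs_mat n C A) = n"
    and "is_nul C (X 0)"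
    and "\<And>i. 1 \<le> i \<Longrightarrow> i \<le> n - 2 \<Longrightarrow> is_nul (transpose_mat (A * X (i - 1))) (Y i)"
    and "\<And>i. 1 \<le> i \<Longrightarrow> i \<le> n - 2 \<Longrightarrow> is_nul (C @\<^sub>r transpose_mat (Y i)) (X i)"
  shows "let Lpre = A * X (n - 2);
             L = (1 / (C * Lpre) $$ (0, 0)) \<cdot>\<^sub>m (A * Lpre)
         in Lpre \<in> carrier_mat n 1 \<and> Lpre \<noteq> 0\<^sub>m n 1 \<and> (C * Lpre) $$ (0, 0) \<noteq> 0
            \<and> nilpotent_mat (A - L * C)"
proof -
  note n = assms(1) and A = assms(2) and C = assms(3) and rk = assms(4)
    and n0 = assms(5) and nY = assms(6) and nX = assms(7)
  define c where "c = row C 0"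
  have rc: "c \<in> carrier_vec n" unfolding c_def using row_carrier_vec[OF _ C, of 0] by simp
  have obs: "u = 0\<^sub>v n" if "u \<in> carrier_vec n" "\<forall>j<n. c \<bullet> ((A ^\<^sub>m j) *\<^sub>v u) = 0" for u
    using obs_inj[OF A C rk] that unfolding c_def by blast
  obtain x0 where x0: "x0 \<in> carrier_vec n" "x0 \<noteq> 0\<^sub>v n" and hz: "\<forall>j<n-1. c \<bullet> ((A ^\<^sub>m j) *\<^sub>v x0) = 0"
    using exists_x0[OF A C] n unfolding c_def by auto
  define \<gamma> where "\<gamma> = c \<bullet> ((A ^\<^sub>m (n-1)) *\<^sub>v x0)"
  have gz: "\<gamma> \<noteq> 0"
  proof
    assume "\<gamma> = 0"
    then have "\<forall>j<n. c \<bullet> ((A ^\<^sub>m j) *\<^sub>v x0) = 0" using hz unfolding \<gamma>_def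
      by (metis One_nat_def Suc_pred' assms(1) less_Suc_eq not_gr0 not_numeral_le_zero)
    then show False using obs x0 by blast
  qed
  have W: "u = ((c \<bullet> ((A ^\<^sub>m (n-1)) *\<^sub>v u)) / \<gamma>) \<cdot>\<^sub>v x0"
    if u: "u \<in> carrier_vec n" and hu: "\<forall>j<n-1. c \<bullet> ((A ^\<^sub>m j) *\<^sub>v u) = 0" for u
  proof -
    define t where "t = (c \<bullet> ((A ^\<^sub>m (n-1)) *\<^sub>v u)) / \<gamma>"
    have dc: "u - t \<cdot>\<^sub>v x0 \<in> carrier_vec n" using u x0 by simp
    have "\<forall>j<n. c \<bullet> ((A ^\<^sub>m j) *\<^sub>v (u - t \<cdot>\<^sub>v x0)) = 0"
    proof (intro allI impI)
      fix j assume j: "j < n"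
      show "c \<bullet> ((A ^\<^sub>m j) *\<^sub>v (u - t \<cdot>\<^sub>v x0)) = 0"
      proof (cases "j < n - 1")
        case True then show ?thesis using lin_ex[OF A rc u x0(1)] hu hz by simp
      next
        case False
        then have "j = n - 1" using j by simp
        then show ?thesis using lin_ex[OF A rc u x0(1)] gz unfolding t_def \<gamma>_def by simp
      qed
    qed
    then have "u - t \<cdot>\<^sub>v x0 = 0\<^sub>v n" using obs dc by blast
    then have "u = t \<cdot>\<^sub>v x0"
    proof -
      assume h0: "u - t \<cdot>\<^sub>v x0 = 0\<^sub>v n"
      show ?thesis
      proof (rule eq_vecI)
        fix i assume "i < dim_vec (t \<cdot>\<^sub>v x0)"
        then have i: "i < n" using x0 by simp
        have "(u - t \<cdot>\<^sub>v x0) $ i = 0" using h0 i by simp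
        then show "u $ i = (t \<cdot>\<^sub>v x0) $ i" using i u x0 by simp
      qed (use u x0 in simp)
    qed
    then show ?thesis unfolding t_def .
  qed
  define T where "T i = {(A ^\<^sub>m i) *\<^sub>v u | u. u \<in> carrier_vec n \<and> (\<forall>j\<le>i. c \<bullet> ((A ^\<^sub>m j) *\<^sub>v u) = 0)}" for i
  have ind: "X i \<in> carrier_mat n (dim_col (X i)) \<and> spn n (set (cols (X i))) = T i" if "i \<le> n - 2" for i
    using that
  proof (induct i)
    case 0
    have "spn n (set (cols (X 0))) = {x \<in> carrier_vec n. C *\<^sub>v x = 0\<^sub>v 1}" using nul_base[OF C n0] by simp
    also have "\<dots> = T 0"
    proof -
      have e0: "(A ^\<^sub>m 0) *\<^sub>v u = u" if "u \<in> carrier_vec n" for u using A that by simp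
      have "T 0 = {u. u \<in> carrier_vec n \<and> c \<bullet> u = 0}"
      proof (rule equalityI; rule subsetI)
        fix x assume "x \<in> T 0"
        then obtain u where xu: "x = (A ^\<^sub>m 0) *\<^sub>v u" and u: "u \<in> carrier_vec n"
          and hu: "\<forall>j\<le>0. c \<bullet> ((A ^\<^sub>m j) *\<^sub>v u) = 0"
          unfolding T_def by blast
        have "x = u" using xu e0[OF u] by simp
        moreover have "c \<bullet> ((A ^\<^sub>m 0) *\<^sub>v u) = 0" using hu by blast
        ultimately show "x \<in> {u. u \<in> carrier_vec n \<and> c \<bullet> u = 0}" using e0[OF u] u by simp
      next
        fix x assume "x \<in> {u. u \<in> carrier_vec n \<and> c \<bullet> u = 0}"
        then have x: "x \<in> carrier_vec n" "c \<bullet> x = 0" by simp_all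
        have 1: "x = (A ^\<^sub>m 0) *\<^sub>v x" using e0[OF x(1)] by simp
        have 2: "\<forall>j\<le>0. c \<bullet> ((A ^\<^sub>m j) *\<^sub>v x) = 0" using e0[OF x(1)] x(2) by simp
        show "x \<in> T 0" unfolding T_def using x(1) 1 2 by blast
      qed
      moreover have "C *\<^sub>v x = 0\<^sub>v 1 \<longleftrightarrow> c \<bullet> x = 0" if "x \<in> carrier_vec n" for x
        using C_zero_iff[OF C that] unfolding c_def .
      ultimately show ?thesis by blast
    qed
    finally show ?case using nul_base(1)[OF C n0] by blast
  next
    case (Suc i)
    have ile: "i \<le> n - 2" using Suc(2) by linarith
    have IH: "X i \<in> carrier_mat n (dim_col (X i))" "spn n (set (cols (X i))) = T i" using Suc(1)[OF ile] by blast+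
    have o1: "1 \<le> Suc i" by simp
    have ny0: "is_nul (transpose_mat (A * X (Suc i - 1))) (Y (Suc i))" by (rule nY[OF o1 Suc(2)])
    then have ny: "is_nul (transpose_mat (A * X i)) (Y (Suc i))" by simp
    have nx: "is_nul (C @\<^sub>r transpose_mat (Y (Suc i))) (X (Suc i))" by (rule nX[OF o1 Suc(2)])
    note st = nul_step[OF A C IH(1) ny nx]
    have "{x \<in> carrier_vec n. C *\<^sub>v x = 0\<^sub>v 1 \<and> x \<in> (\<lambda>v. A *\<^sub>v v) ` T i} = T (Suc i)"
    proof (rule equalityI; rule subsetI)
      fix x assume "x \<in> {x \<in> carrier_vec n. C *\<^sub>v x = 0\<^sub>v 1 \<and> x \<in> (\<lambda>v. A *\<^sub>v v) ` T i}"
      then obtain u where x: "x \<in> carrier_vec n" "C *\<^sub>v x = 0\<^sub>v 1" "x = A *\<^sub>v ((A ^\<^sub>m i) *\<^sub>v u)"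
        and u: "u \<in> carrier_vec n" "\<forall>j\<le>i. c \<bullet> ((A ^\<^sub>m j) *\<^sub>v u) = 0" unfolding T_def by blast
      have xs: "x = (A ^\<^sub>m Suc i) *\<^sub>v u" using x(3) powv_Suc[OF A u(1)] by simp
      have "c \<bullet> x = 0" using C_zero_iff[OF C x(1)] x(2) unfolding c_def by simp
      then have "\<forall>j\<le>Suc i. c \<bullet> ((A ^\<^sub>m j) *\<^sub>v u) = 0"
      proof (intro allI impI)
        fix j assume cx: "c \<bullet> x = 0" and j: "j \<le> Suc i"
        show "c \<bullet> ((A ^\<^sub>m j) *\<^sub>v u) = 0"
        proof (cases "j = Suc i")
          case True then show ?thesis using cx xs by simp
        next
          case False then show ?thesis using u(2) j by simp
        qed
      qed
      then show "x \<in> T (Suc i)" unfolding T_def using xs u(1) by blast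
    next
      fix x assume "x \<in> T (Suc i)"
      then obtain u where x: "x = (A ^\<^sub>m Suc i) *\<^sub>v u" and u: "u \<in> carrier_vec n"
        "\<forall>j\<le>Suc i. c \<bullet> ((A ^\<^sub>m j) *\<^sub>v u) = 0" unfolding T_def by blast
      have xc: "x \<in> carrier_vec n" unfolding x by (rule powv_carrier[OF A])
      have "c \<bullet> x = 0" unfolding x using u(2) le_refl by blast
      then have "C *\<^sub>v x = 0\<^sub>v 1" using C_zero_iff[OF C xc] unfolding c_def by simp
      moreover have "(A ^\<^sub>m i) *\<^sub>v u \<in> T i" unfolding T_def using u by auto
      moreover have "x = A *\<^sub>v ((A ^\<^sub>m i) *\<^sub>v u)" using x powv_Suc[OF A u(1)] by simp
      ultimately have "x \<in> (\<lambda>v. A *\<^sub>v v) ` T i" "C *\<^sub>v x = 0\<^sub>v 1" by (auto intro: rev_image_eqI)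
      then show "x \<in> {x \<in> carrier_vec n. C *\<^sub>v x = 0\<^sub>v 1 \<and> x \<in> (\<lambda>v. A *\<^sub>v v) ` T i}"
        using xc by (intro CollectI conjI)
    qed
    then have "spn n (set (cols (X (Suc i)))) = T (Suc i)" using st(2) IH(2) by (simp only:)
    then show ?case using st(1) by (intro conjI)
  qed
  define v where "v = (A ^\<^sub>m (n-2)) *\<^sub>v x0"
  have vc: "v \<in> carrier_vec n" unfolding v_def using A by simp
  have nn: "n - 1 = Suc (n - 2)" using n by simp
  have wv: "(A ^\<^sub>m (n-1)) *\<^sub>v x0 = A *\<^sub>v v" unfolding nn v_def by (rule powv_Suc[OF A x0(1)])
  have vnz: "v \<noteq> 0\<^sub>v n"
  proof
    assume "v = 0\<^sub>v n"
    then have "\<gamma> = c \<bullet> (A *\<^sub>v 0\<^sub>v n)" unfolding \<gamma>_def wv by simp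
    also have "\<dots> = 0" using mult_mat_vec_zero[OF A] rc by simp
    finally show False using gz by simp
  qed
  have Tn: "T (n-2) = spn n {v}"
  proof -
    have "T (n-2) = {a \<cdot>\<^sub>v v | a. True}"
    proof (rule equalityI; rule subsetI)
      fix x assume "x \<in> T (n-2)"
      then obtain u where x: "x = (A ^\<^sub>m (n-2)) *\<^sub>v u" and u: "u \<in> carrier_vec n"
        "\<forall>j\<le>n-2. c \<bullet> ((A ^\<^sub>m j) *\<^sub>v u) = 0" unfolding T_def by blast
      have "\<forall>j<n-1. c \<bullet> ((A ^\<^sub>m j) *\<^sub>v u) = 0"
      proof (intro allI impI)
        fix j assume "j < n - 1"
        then have "j \<le> n - 2" by linarith
        then show "c \<bullet> ((A ^\<^sub>m j) *\<^sub>v u) = 0" using u(2) by blast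
      qed
      then have ut: "u = ((c \<bullet> ((A ^\<^sub>m (n-1)) *\<^sub>v u)) / \<gamma>) \<cdot>\<^sub>v x0" using W u(1) by blast
      have "x = ((c \<bullet> ((A ^\<^sub>m (n-1)) *\<^sub>v u)) / \<gamma>) \<cdot>\<^sub>v v"
        unfolding x v_def by (subst ut, rule mult_mat_vec[OF pow_carrier_mat[OF A] x0(1)])
      then show "x \<in> {a \<cdot>\<^sub>v v | a. True}" by (intro CollectI exI conjI TrueI)
    next
      fix x assume "x \<in> {a \<cdot>\<^sub>v v | a. True}"
      then obtain a where x: "x = a \<cdot>\<^sub>v v" by blast
      have "x = (A ^\<^sub>m (n-2)) *\<^sub>v (a \<cdot>\<^sub>v x0)"
        unfolding x v_def by (rule mult_mat_vec[OF pow_carrier_mat[OF A] x0(1), symmetric])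
      moreover have "\<forall>j\<le>n-2. c \<bullet> ((A ^\<^sub>m j) *\<^sub>v (a \<cdot>\<^sub>v x0)) = 0"
      proof (intro allI impI)
        fix j assume j: "j \<le> n - 2"
        have "c \<bullet> ((A ^\<^sub>m j) *\<^sub>v (a \<cdot>\<^sub>v x0)) = a * (c \<bullet> ((A ^\<^sub>m j) *\<^sub>v x0))"
          using mult_mat_vec[OF pow_carrier_mat[OF A] x0(1)] rc A by simp
        also have "\<dots> = 0"
        proof -
          have "j < n - 1" using j n by linarith
          then show ?thesis using hz by simp
        qed
        finally show "c \<bullet> ((A ^\<^sub>m j) *\<^sub>v (a \<cdot>\<^sub>v x0)) = 0" .
      qed
      ultimately show "x \<in> T (n-2)" unfolding T_def using x0(1) by (intro CollectI exI[of _ "a \<cdot>\<^sub>v x0"] conjI) auto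
    qed
    then show ?thesis using span_single[OF vc] by simp
  qed
  obtain M nr where Mc: "M \<in> carrier_mat nr n" and nM: "is_nul M (X (n-2))"
  proof (cases "n - 2 = 0")
    case True then show ?thesis using that[OF C] n0 by simp
  next
    case False
    then have "is_nul (C @\<^sub>r transpose_mat (Y (n-2))) (X (n-2))" using nX[of "n-2"] by simp
    moreover have "is_nul (transpose_mat (A * X (n-2-1))) (Y (n-2))" using nY[of "n-2"] False by simp
    then have "Y (n-2) \<in> carrier_mat n (kernel_dim (transpose_mat (A * X (n-2-1))))"
      unfolding is_nul_def using A by simp
    then have "C @\<^sub>r transpose_mat (Y (n-2)) \<in> carrier_mat (1 + kernel_dim (transpose_mat (A * X (n-2-1)))) n"
      using carrier_append_rows[OF C] by simp
    ultimately show ?thesis using that by blast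
  qed
  have kerM: "mat_kernel M = spn n {v}" using nM Mc Tn ind[of "n-2"] unfolding is_nul_def by simp
  have "kernel_dim M = 1" using kdim_one[OF Mc vc vnz kerM] .
  then have Xc: "X (n-2) \<in> carrier_mat n 1" using nM Mc unfolding is_nul_def by simp
  define xh where "xh = col (X (n-2)) 0"
  have xhc: "xh \<in> carrier_vec n" unfolding xh_def using col_carrier_vec[OF _ Xc, of 0] by simp
  have colsX: "set (cols (X (n-2))) = {xh}" unfolding xh_def using Xc by (auto simp: cols_def)
  have spx: "spn n {xh} = spn n {v}" using ind[of "n-2"] Tn colsX by simp
  have "xh \<in> spn n {xh}" unfolding span_single[OF xhc] by (intro CollectI exI[of _ 1] conjI) (use xhc in simp_all)
  then obtain t where xht: "xh = t \<cdot>\<^sub>v v" using spx span_single[OF vc] by auto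
  have tnz: "t \<noteq> 0"
  proof
    assume "t = 0"
    then have "xh = 0\<^sub>v n" using xht vc by auto
    moreover have "v \<in> spn n {xh}" unfolding spx span_single[OF vc] by (intro CollectI exI[of _ 1] conjI) (use vc in simp_all)
    ultimately obtain b where "v = b \<cdot>\<^sub>v 0\<^sub>v n" using span_single[OF xhc] by auto
    then show False using vnz by auto
  qed
  define w where "w = A *\<^sub>v v"
  have wc: "w \<in> carrier_vec n" unfolding w_def using A vc by simp
  have cw: "c \<bullet> w = \<gamma>" unfolding w_def \<gamma>_def wv ..
  define Lpre where "Lpre = A * X (n - 2)"
  have Lc: "Lpre \<in> carrier_mat n 1" unfolding Lpre_def using A Xc by simp
  have colL: "col Lpre 0 = t \<cdot>\<^sub>v w"
  proof -
    have "col Lpre 0 = A *\<^sub>v xh" unfolding Lpre_def xh_def using col_mult2[OF A Xc, of 0] by simp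
    also have "\<dots> = t \<cdot>\<^sub>v w" unfolding xht w_def by (rule mult_mat_vec[OF A vc])
    finally show ?thesis .
  qed
  have CL: "(C * Lpre) $$ (0, 0) = t * \<gamma>"
    using C Lc colL rc wc cw unfolding c_def by simp
  have CLnz: "(C * Lpre) $$ (0, 0) \<noteq> 0" using CL tnz gz by simp
  have Lnz: "Lpre \<noteq> 0\<^sub>m n 1"
  proof
    assume "Lpre = 0\<^sub>m n 1"
    then have "(C * Lpre) $$ (0, 0) = 0" using C by (simp add: scalar_prod_def)
    then show False using CLnz by simp
  qed
  define L where "L = (1 / (C * Lpre) $$ (0, 0)) \<cdot>\<^sub>m (A * Lpre)"
  have LLc: "L \<in> carrier_mat n 1" unfolding L_def using A Lc by simp
  have colLL: "col L 0 = (1 / \<gamma>) \<cdot>\<^sub>v (A *\<^sub>v w)"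
  proof -
    have "col L 0 = (1 / (t * \<gamma>)) \<cdot>\<^sub>v (A *\<^sub>v (t \<cdot>\<^sub>v w))" unfolding L_def CL
      using col_mult2[OF A Lc, of 0] colL A Lc by simp
    also have "\<dots> = (1 / \<gamma>) \<cdot>\<^sub>v (A *\<^sub>v w)" using mult_mat_vec[OF A wc] tnz
      by (simp add: smult_smult_assoc)
    finally show ?thesis .
  qed
  define F where "F = A - L * C"
  have LCc: "L * C \<in> carrier_mat n n" using LLc C by simp
  have Fc: "F \<in> carrier_mat n n" unfolding F_def by (rule minus_carrier_mat[OF LCc])
  have hF: "\<forall>u\<in>carrier_vec n. F *\<^sub>v u = A *\<^sub>v u - ((c \<bullet> u) / (c \<bullet> ((A ^\<^sub>m (n-1)) *\<^sub>v x0))) \<cdot>\<^sub>v (A *\<^sub>v ((A ^\<^sub>m (n-1)) *\<^sub>v x0))"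
  proof
    fix u :: "real vec" assume u: "u \<in> carrier_vec n"
    have Cu: "C *\<^sub>v u = vec 1 (\<lambda>_. c \<bullet> u)" using C u unfolding c_def by (intro eq_vecI) auto
    have "(L * C) *\<^sub>v u = L *\<^sub>v (C *\<^sub>v u)" using LLc C u by (intro assoc_mult_mat_vec) auto
    also have "\<dots> = (c \<bullet> u) \<cdot>\<^sub>v col L 0" unfolding Cu using mat_vec_col1[OF LLc, of "vec 1 (\<lambda>_. c \<bullet> u)"] by simp
    also have "\<dots> = ((c \<bullet> u) / \<gamma>) \<cdot>\<^sub>v (A *\<^sub>v w)" unfolding colLL by (simp add: smult_smult_assoc)
    finally have "(L * C) *\<^sub>v u = ((c \<bullet> u) / \<gamma>) \<cdot>\<^sub>v (A *\<^sub>v w)" .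
    moreover have "F *\<^sub>v u = A *\<^sub>v u - (L * C) *\<^sub>v u" unfolding F_def using minus_mult_distrib_mat_vec[OF A LCc u] .
    ultimately show "F *\<^sub>v u = A *\<^sub>v u - ((c \<bullet> u) / (c \<bullet> ((A ^\<^sub>m (n-1)) *\<^sub>v x0))) \<cdot>\<^sub>v (A *\<^sub>v ((A ^\<^sub>m (n-1)) *\<^sub>v x0))"
      unfolding \<gamma>_def[symmetric] wv w_def[symmetric] using cw by simp
  qed
  have "F ^\<^sub>m n = 0\<^sub>m n n"
    by (rule nilpotent_krylov[OF A rc x0(1) _ hz _ Fc hF]) (use n gz \<gamma>_def in auto)
  then have "nilpotent_mat F" unfolding nilpotent_mat_def using Fc by auto
  then show ?thesis unfolding Let_def Lpre_def[symmetric] L_def[symmetric] F_def[symmetric]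
    using Lc Lnz CLnz by simp
qed

end
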